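(* Let $k\ge 2$, let $H_0$ be a finite $k$-uniform hypergraph and let $(H_t)_{t\ge0}$ be the ILTH hypergraphs generated from $H_0$. The number of paths of length two in $H_t$ is $\Theta\left((k^2+1)^t\right)$.
   Context: A $k$-uniform hypergraph has every hyperedge a $k$-element subset of the vertex set. The ILTH process: given $H_t$, form $H_{t+1}$ by adding for each vertex $x\in V(H_t)$ a new vertex $x'$ (its clone), and taking $E(H_{t+1})=E(H_t)\cup\{(e\setminus\{x\})\cup\{x'\} : e\in E(H_t),\ x\in e\}$. A path of length two in a hypergraph is a 5-tuple $(u,e_1,v,e_2,w)$ with $u,v,w$ distinct vertices, $e_1,e_2$ distinct hyperedges, $u,v\in e_1$ and $v,w\in e_2$. Asymptotics are as $t\to\infty$ with $k$ and $H_0$ fixed. *)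

theory Defs
  imports Main "HOL-Library.Landau_Symbols"
begin

definition k_uniform_hypergraph :: "nat \<Rightarrow> 'v set \<Rightarrow> 'v set set \<Rightarrow> bool" where
  "k_uniform_hypergraph k V E \<longleftrightarrow> finite V \<and> (\<forall>e\<in>E. e \<subseteq> V \<and> card e = k)"

text \<open>Vertices of the ILTH hypergraphs are named by pairs (x, l): x a vertex of H_0 and
  l a list recording the cloning history. The clone of (x, l) created at step t is
  (x, l @ [t]), which is a fresh vertex (all lists occurring in H_t have entries < t).\<close>

definition clone :: "nat \<Rightarrow> 'a \<times> nat list \<Rightarrow> 'a \<times> nat list" where
  "clone t v = (fst v, snd v @ [t])"

fun ilth_V :: "'a set \<Rightarrow> nat \<Rightarrow> ('a \<times> nat list) set" where
  "ilth_V V0 0 = (\<lambda>x. (x, [])) ` V0"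
| "ilth_V V0 (Suc t) = ilth_V V0 t \<union> clone t ` ilth_V V0 t"

fun ilth_E :: "'a set set \<Rightarrow> nat \<Rightarrow> ('a \<times> nat list) set set" where
  "ilth_E E0 0 = (\<lambda>e. (\<lambda>x. (x, [])) ` e) ` E0"
| "ilth_E E0 (Suc t) = ilth_E E0 t \<union>
     {insert (clone t x) (e - {x}) | e x. e \<in> ilth_E E0 t \<and> x \<in> e}"

definition paths2 :: "'v set \<Rightarrow> 'v set set \<Rightarrow> ('v \<times> 'v set \<times> 'v \<times> 'v set \<times> 'v) set" where
  "paths2 V E = {(u, e1, v, e2, w). u \<in> V \<and> v \<in> V \<and> w \<in> V \<and>
      u \<noteq> v \<and> v \<noteq> w \<and> u \<noteq> w \<and> e1 \<in> E \<and> e2 \<in> E \<and> e1 \<noteq> e2 \<and>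
      u \<in> e1 \<and> v \<in> e1 \<and> v \<in> e2 \<and> w \<in> e2}"

end

theory Submission
  imports Defs
begin

lemma clone_inj: "clone t a = clone t b \<Longrightarrow> a = b"
  by (cases a; cases b) (simp add: clone_def)

locale ilth_ctx =
  fixes k :: nat and V0 :: "'a set" and E0 :: "'a set set"
  assumes k2: "k \<ge> 2"
    and hyp: "k_uniform_hypergraph k V0 E0"
    and ne: "E0 \<noteq> {}"
begin

abbreviation "V t \<equiv> ilth_V V0 t"
abbreviation "E t \<equiv> ilth_E E0 t"

definition N :: "nat \<Rightarrow> ('a \<times> nat list) set \<Rightarrow> 'a \<times> nat list \<Rightarrow> ('a \<times> nat list) set" where
  "N t e x = insert (clone t x) (e - {x})"

lemma finV0: "finite V0" and E0sub: "\<And>e. e \<in> E0 \<Longrightarrow> e \<subseteq> V0 \<and> card e = k"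
  using hyp unfolding k_uniform_hypergraph_def by auto

lemma finE0: "finite E0"
proof -
  have "E0 \<subseteq> Pow V0" using E0sub by blast
  thus ?thesis using finV0 by (meson finite_Pow_iff finite_subset)
qed

lemma inv: "finite (V t) \<and> (\<forall>v\<in>V t. \<forall>i\<in>set (snd v). i < t) \<and>
   (\<forall>e\<in>E t. e \<subseteq> V t \<and> card e = k) \<and> finite (E t)"
proof (induction t)
  case 0
  show ?case using finV0 finE0 E0sub
    by (auto simp: card_image inj_on_def)
next
  case (Suc t)
  have fr: "clone t x \<notin> V t" for x using Suc by (auto simp: clone_def)
  have A: "finite (V (Suc t))" using Suc by simp
  have B: "\<forall>v\<in>V (Suc t). \<forall>i\<in>set (snd v). i < Suc t"
    using Suc by (auto simp: clone_def less_Suc_eq)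
  have C: "\<forall>e\<in>E (Suc t). e \<subseteq> V (Suc t) \<and> card e = k"
  proof
    fix e' assume "e' \<in> E (Suc t)"
    then consider "e' \<in> E t" | e x where "e \<in> E t" "x \<in> e" "e' = insert (clone t x) (e - {x})"
      by auto
    then show "e' \<subseteq> V (Suc t) \<and> card e' = k"
    proof cases
      case 1 then show ?thesis using Suc by auto
    next
      case 2
      have "e \<subseteq> V t" "card e = k" using 2 Suc by auto
      hence fe: "finite e" using k2 by (metis card.infinite not_numeral_le_zero)
      have "clone t x \<notin> e - {x}" using fr[of x] \<open>e \<subseteq> V t\<close> by blast
      hence "card e' = card (e - {x}) + 1" using 2 fe by simp
      also have "\<dots> = k" using 2 fe \<open>card e = k\<close> k2 by simp
      finally show ?thesis using 2 \<open>e \<subseteq> V t\<close> by auto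
    qed
  qed
  have img: "{insert (clone t x) (e - {x}) | e x. e \<in> E t \<and> x \<in> e}
      = (\<lambda>(e,x). insert (clone t x) (e - {x})) ` (SIGMA e:E t. e)" by auto
  have fS: "finite (SIGMA e:E t. e)"
    using Suc by (meson finite_SigmaI finite_subset)
  have D: "finite (E (Suc t))"
    unfolding ilth_E.simps img using Suc fS by (intro finite_UnI finite_imageI) auto
  show ?case using A B C D by (intro conjI)
qed

lemma finV: "finite (V t)" using inv by blast
lemma finE: "finite (E t)" using inv by blast
lemma Esub: "e \<in> E t \<Longrightarrow> e \<subseteq> V t" using inv by blast
lemma Ecard: "e \<in> E t \<Longrightarrow> card e = k" using inv by blast
lemma Efin: "e \<in> E t \<Longrightarrow> finite e"
  using Ecard k2 by (metis card.infinite not_numeral_le_zero)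
lemma fresh: "clone t x \<notin> V t" using inv by (fastforce simp: clone_def)
lemma fresh_e: "e \<in> E t \<Longrightarrow> clone t x \<notin> e" using Esub fresh by blast

lemma N_inj: assumes "e \<in> E t" "x \<in> e" "e' \<in> E t" "x' \<in> e'" "N t e x = N t e' x'"
  shows "e = e' \<and> x = x'"
proof -
  have "clone t x \<in> N t e x" by (simp add: N_def)
  hence "clone t x \<in> N t e' x'" using assms(5) by simp
  hence "clone t x = clone t x' \<or> clone t x \<in> e'" unfolding N_def by blast
  hence "x = x'" using fresh_e[OF assms(3), of x] clone_inj by blast
  moreover have "e - {x} = N t e x - {clone t x}" using fresh_e[OF assms(1)] by (auto simp: N_def)
  moreover have "e' - {x} = N t e' x - {clone t x}" using fresh_e[OF assms(3)] by (auto simp: N_def)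
  ultimately have "e - {x} = e' - {x}" using assms(5) by simp
  hence "e = e'" using assms(2,4) \<open>x = x'\<close> by (metis insert_Diff)
  thus ?thesis using \<open>x = x'\<close> by simp
qed

lemma N_notin: "N t e x \<notin> E t"
  using fresh_e[of _ t x] unfolding N_def by blast

lemma ESuc: "E (Suc t) = E t \<union> (\<lambda>(e,x). N t e x) ` (SIGMA e:E t. e)"
  by (auto simp: N_def)

definition deg :: "nat \<Rightarrow> 'a \<times> nat list \<Rightarrow> nat" where
  "deg t v = card {e \<in> E t. v \<in> e}"

lemma degA: assumes "v \<in> V t" shows "deg (Suc t) v = k * deg t v"
proof -
  let ?A = "{e \<in> E t. v \<in> e}"
  let ?S = "SIGMA e:?A. e - {v}"
  have eq: "{e \<in> E (Suc t). v \<in> e} = ?A \<union> (\<lambda>(e,x). N t e x) ` ?S"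
  proof -
    have vne: "v \<noteq> clone t x" for x using fresh assms by blast
    have memN: "v \<in> N t e x \<longleftrightarrow> v \<in> e \<and> v \<noteq> x" for e x using vne[of x] by (simp add: N_def)
    show ?thesis unfolding ESuc by (auto simp: memN intro: rev_image_eqI)
  qed
  have finA: "finite ?A" using finE by simp
  have finS: "finite ?S" using finA Efin by auto
  have "\<forall>y \<in> (\<lambda>(e,x). N t e x) ` ?S. y \<notin> E t" using N_notin by auto
  hence disj: "?A \<inter> (\<lambda>(e,x). N t e x) ` ?S = {}" by blast
  have inj: "inj_on (\<lambda>(e,x). N t e x) ?S"
  proof (rule inj_onI)
    fix p q assume p: "p \<in> ?S" and q: "q \<in> ?S" and pq: "(\<lambda>(e,x). N t e x) p = (\<lambda>(e,x). N t e x) q"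
    obtain e x where pe: "p = (e,x)" by (cases p) blast
    obtain e' x' where qe: "q = (e',x')" by (cases q) blast
    show "p = q" using N_inj[of e t x e' x'] p q pq unfolding pe qe by auto
  qed
  have "card ?S = (\<Sum>e\<in>?A. card (e - {v}))" using finA Efin by (intro card_SigmaI) auto
  also have "\<dots> = (\<Sum>e\<in>?A. k - 1)" using Efin Ecard by (intro sum.cong) auto
  also have "\<dots> = deg t v * (k - 1)" by (simp add: deg_def)
  finally have cS: "card ?S = deg t v * (k - 1)" .
  have "deg (Suc t) v = card ?A + card ((\<lambda>(e,x). N t e x) ` ?S)"
    unfolding deg_def eq using finA finS disj by (simp add: card_Un_disjoint)
  also have "\<dots> = deg t v + deg t v * (k - 1)" using cS inj card_image by (fastforce simp: deg_def)
  also have "\<dots> = k * deg t v" using k2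
    by (metis (no_types, lifting) Suc_diff_1 add.commute less_le_trans mult.commute mult_Suc_right
        pos2 )
  finally show ?thesis .
qed

lemma degB: assumes "v \<in> V t" shows "deg (Suc t) (clone t v) = deg t v"
proof -
  let ?A = "{e \<in> E t. v \<in> e}"
  have eq: "{e \<in> E (Suc t). clone t v \<in> e} = (\<lambda>e. N t e v) ` ?A"
  proof -
    have memC: "clone t v \<in> N t e x \<longleftrightarrow> x = v" if "e \<in> E t" for e x
    proof
      assume "clone t v \<in> N t e x"
      hence "clone t v = clone t x \<or> clone t v \<in> e" unfolding N_def by blast
      thus "x = v" using fresh_e[OF that, of v] clone_inj by metis
    qed (simp add: N_def)
    have old: "clone t v \<notin> e" if "e \<in> E t" for e using fresh_e[OF that] .
    show ?thesis unfolding ESuc by (auto simp: memC old intro: rev_image_eqI)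
  qed
  have "inj_on (\<lambda>e. N t e v) ?A"
  proof (rule inj_onI)
    fix x y assume "x \<in> ?A" "y \<in> ?A" "N t x v = N t y v"
    thus "x = y" using N_inj[of x t v y v] by blast
  qed
  thus ?thesis unfolding deg_def eq by (simp add: card_image)
qed

lemma VSuc_sum: "(\<Sum>v\<in>V (Suc t). f (deg (Suc t) v)) =
   (\<Sum>v\<in>V t. f (k * deg t v)) + (\<Sum>v\<in>V t. f (deg t v))"
proof -
  have disj: "V t \<inter> clone t ` V t = {}" using fresh by blast
  have inj: "inj_on (clone t) (V t)" by (meson clone_inj inj_onI)
  have "(\<Sum>v\<in>V (Suc t). f (deg (Suc t) v)) =
     (\<Sum>v\<in>V t. f (deg (Suc t) v)) + (\<Sum>v\<in>clone t ` V t. f (deg (Suc t) v))"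
    using finV disj by (simp add: sum.union_disjoint)
  also have "(\<Sum>v\<in>clone t ` V t. f (deg (Suc t) v)) = (\<Sum>v\<in>V t. f (deg (Suc t) (clone t v)))"
    using inj by (simp add: sum.reindex)
  finally show ?thesis using degA degB by simp
qed

definition S :: "nat \<Rightarrow> nat" where "S t = (\<Sum>v\<in>V t. deg t v ^ 2)"
definition D :: "nat \<Rightarrow> nat" where "D t = (\<Sum>v\<in>V t. deg t v)"

lemma S_eq: "S t = (k^2+1)^t * S 0"
proof (induction t)
  case (Suc t)
  have "S (Suc t) = (\<Sum>v\<in>V t. (k * deg t v)^2) + S t"
    unfolding S_def by (rule VSuc_sum)
  also have "(\<Sum>v\<in>V t. (k * deg t v)^2) = k^2 * S t"
    by (simp add: S_def sum_distrib_left power_mult_distrib)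
  finally show ?case using Suc by (simp add: algebra_simps)
qed simp

lemma D_eq: "D t = (k+1)^t * D 0"
proof (induction t)
  case (Suc t)
  have "D (Suc t) = (\<Sum>v\<in>V t. (k * deg t v)) + D t"
    unfolding D_def by (rule VSuc_sum)
  also have "(\<Sum>v\<in>V t. (k * deg t v)) = k * D t"
    by (simp add: D_def sum_distrib_left)
  finally show ?case using Suc by (simp add: algebra_simps)
qed simp

lemma D0_le: "D 0 \<le> S 0"
  unfolding D_def S_def by (intro sum_mono) (simp add: power2_eq_square)

lemma S0_pos: "S 0 \<ge> 1"
proof -
  obtain e where e: "e \<in> E0" using ne by blast
  hence "card e = k" using E0sub by blast
  hence "e \<noteq> {}" using k2 by auto
  then obtain x where x: "x \<in> e" by blast
  let ?v = "(x, [] :: nat list)"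
  have vV: "?v \<in> V 0" using x e E0sub by auto
  have "(\<lambda>x. (x, [])) ` e \<in> {e \<in> E 0. ?v \<in> e}" using e x by auto
  hence "deg 0 ?v \<ge> 1" unfolding deg_def using finE
    by (metis (no_types, lifting) One_nat_def Suc_leI card_gt_0_iff empty_iff finite_subset mem_Collect_eq subsetI)
  hence "deg 0 ?v ^ 2 \<ge> 1" by simp
  moreover have "deg 0 ?v ^ 2 \<le> S 0" unfolding S_def using finV[of 0] vV
    by (intro member_le_sum) auto
  ultimately show ?thesis by linarith
qed

definition P :: "nat \<Rightarrow> nat" where "P t = card (paths2 (V t) (E t))"

lemma Ev_fin: "finite {e \<in> E t. v \<in> e}" using finE by simp

lemma P_upper: "P t \<le> k^2 * S t"
proof -
  let ?Ev = "\<lambda>v. {e \<in> E t. v \<in> e}"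
  let ?T = "SIGMA v:V t. SIGMA e1:?Ev v. SIGMA e2:?Ev v. e1 \<times> e2"
  let ?g = "\<lambda>(v,e1,e2,u,w). (u,e1,v,e2,w)"
  have finT: "finite ?T" using finV Ev_fin Efin by (auto intro!: finite_SigmaI)
  have sub: "paths2 (V t) (E t) \<subseteq> ?g ` ?T"
  proof
    fix p assume "p \<in> paths2 (V t) (E t)"
    then obtain u e1 v e2 w where p: "p = (u,e1,v,e2,w)" and
      h: "v \<in> V t" "e1 \<in> E t" "e2 \<in> E t" "u \<in> e1" "v \<in> e1" "v \<in> e2" "w \<in> e2"
      unfolding paths2_def by auto
    have "(v,e1,e2,u,w) \<in> ?T" using h by auto
    thus "p \<in> ?g ` ?T" using p by force
  qed
  have "P t \<le> card (?g ` ?T)" unfolding P_def using finT sub by (intro card_mono) auto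
  also have "\<dots> \<le> card ?T" using finT by (rule card_image_le)
  also have "card ?T = (\<Sum>v\<in>V t. \<Sum>e1\<in>?Ev v. \<Sum>e2\<in>?Ev v. card e1 * card e2)"
  proof -
    have i2: "card (SIGMA e2:?Ev v. e1 \<times> e2) = (\<Sum>e2\<in>?Ev v. card e1 * card e2)" if "e1 \<in> E t" for v e1
      using Ev_fin[of t v] Efin that by (subst card_SigmaI) (auto simp: card_cartesian_product)
    have f2: "finite (SIGMA e2:?Ev v. e1 \<times> e2)" if "e1 \<in> E t" for v e1
      using Ev_fin[of t v] Efin that by (auto intro!: finite_SigmaI)
    have i1: "card (SIGMA e1:?Ev v. SIGMA e2:?Ev v. e1 \<times> e2) = (\<Sum>e1\<in>?Ev v. \<Sum>e2\<in>?Ev v. card e1 * card e2)" for v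
      using Ev_fin[of t v] f2 i2 by (subst card_SigmaI) auto
    have f1: "finite (SIGMA e1:?Ev v. SIGMA e2:?Ev v. e1 \<times> e2)" for v
      using Ev_fin[of t v] Efin by (auto intro!: finite_SigmaI)
    show ?thesis using finV[of t] f1 i1 by (subst card_SigmaI) auto
  qed
  also have "\<dots> = (\<Sum>v\<in>V t. \<Sum>e1\<in>?Ev v. \<Sum>e2\<in>?Ev v. k * k)"
    using Ecard by (intro sum.cong) auto
  also have "\<dots> = k^2 * S t"
    by (simp add: S_def deg_def sum_distrib_left power2_eq_square algebra_simps)
  finally show ?thesis .
qed

lemma P_lower: "S t \<le> P t + D t"
proof -
  let ?Ev = "\<lambda>v. {e \<in> E t. v \<in> e}"
  let ?Q = "SIGMA v:V t. SIGMA e1:?Ev v. (?Ev v - {e1})"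
  define f where "f = (\<lambda>(v::'a \<times> nat list,e1::('a \<times> nat list) set,e2::('a \<times> nat list) set). (SOME u. u \<in> e1 - e2, e1, v, e2, SOME w. w \<in> e2 - {v}))"
  have finP: "finite (paths2 (V t) (E t))"
  proof -
    have "paths2 (V t) (E t) \<subseteq> V t \<times> E t \<times> V t \<times> E t \<times> V t" unfolding paths2_def by auto
    thus ?thesis using finV finE finite_subset by (metis finite_SigmaI)
  qed
  have inj: "inj_on f ?Q" unfolding f_def inj_on_def by auto
  have img: "f ` ?Q \<subseteq> paths2 (V t) (E t)"
  proof
    fix p assume "p \<in> f ` ?Q"
    then obtain v e1 e2 where p: "p = f (v,e1,e2)" and h: "v \<in> V t" "e1 \<in> E t" "e2 \<in> E t"
       "v \<in> e1" "v \<in> e2" "e1 \<noteq> e2" by auto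
    have "\<not> e1 \<subseteq> e2"
    proof
      assume "e1 \<subseteq> e2"
      moreover have "card e1 = card e2" using h Ecard by simp
      ultimately show False using h Efin card_subset_eq by metis
    qed
    hence ex1: "\<exists>u. u \<in> e1 - e2" by blast
    have "card (e2 - {v}) = k - 1" using h Ecard Efin by simp
    hence "card (e2 - {v}) > 0" using k2 by simp
    hence "e2 - {v} \<noteq> {}" using card_gt_0_iff by blast
    hence ex2: "\<exists>w. w \<in> e2 - {v}" by blast
    define u where "u = (SOME u. u \<in> e1 - e2)"
    define w where "w = (SOME w. w \<in> e2 - {v})"
    have u: "u \<in> e1 - e2" using ex1 unfolding u_def by (rule someI_ex)
    have w: "w \<in> e2 - {v}" using ex2 unfolding w_def by (rule someI_ex)
    have "p = (u,e1,v,e2,w)" using p by (simp add: f_def u_def w_def)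
    moreover have "u \<in> V t" "w \<in> V t" using u w h Esub by auto
    ultimately show "p \<in> paths2 (V t) (E t)" using u w h unfolding paths2_def by auto
  qed
  have "card ?Q \<le> P t" unfolding P_def using inj img finP by (rule card_inj_on_le)
  moreover have "card ?Q = (\<Sum>v\<in>V t. \<Sum>e1\<in>?Ev v. (deg t v - 1))"
    using finV Ev_fin by (simp add: deg_def)
  moreover have "(\<Sum>v\<in>V t. \<Sum>e1\<in>?Ev v. (deg t v - 1)) + D t = S t"
  proof -
    have "(\<Sum>v\<in>V t. \<Sum>e1\<in>?Ev v. (deg t v - 1)) + D t = (\<Sum>v\<in>V t. deg t v * (deg t v - 1) + deg t v)"
      by (simp add: D_def deg_def sum.distrib)
    also have "\<dots> = (\<Sum>v\<in>V t. deg t v ^ 2)"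
      by (intro sum.cong) (auto simp: power2_eq_square algebra_simps diff_mult_distrib2)
    finally show ?thesis by (simp add: S_def)
  qed
  ultimately show ?thesis by linarith
qed

end

theorem lemma4p5:
  fixes k :: nat and V0 :: "'a set" and E0 :: "'a set set"
  assumes "k \<ge> 2"
    and "k_uniform_hypergraph k V0 E0"
    and "E0 \<noteq> {}"
  shows "(\<lambda>t. real (card (paths2 (ilth_V V0 t) (ilth_E E0 t))))
           \<in> \<Theta>(\<lambda>t. real (k ^ 2 + 1) ^ t)"
proof -
  interpret ilth_ctx k V0 E0 using assms by unfold_locales
  define a where "a = k^2 + 1"
  define b where "b = k + 1"
  define s where "s = S 0"
  have s1: "s \<ge> 1" using S0_pos s_def by simp
  have a2: "2 * b^2 \<le> a^2"
  proof -
    obtain j where j: "k = j + 2" using assms(1) by (metis add.commute le_Suc_ex)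
    show ?thesis unfolding a_def b_def j by (simp add: power2_eq_square algebra_simps)
  qed
  have key: "2 * b^t \<le> a^t" if "t \<ge> 2" for t
  proof -
    define m where "m = t - 2"
    have m: "t = m + 2" using that m_def by simp
    have kk: "k \<le> k^2" by (cases k) (auto simp: power2_eq_square)
    have "2 * b^t = 2 * b^2 * b^m" unfolding m by (simp add: power_add power2_eq_square)
    also have "\<dots> \<le> a^2 * a^m" using a2 kk by (intro mult_mono power_mono) (auto simp: a_def b_def)
    also have "\<dots> = a^t" unfolding m by (simp add: power_add power2_eq_square)
    finally show ?thesis .
  qed
  have up: "P t \<le> k^2 * s * a^t" for t using P_upper[of t] S_eq[of t] by (simp add: a_def s_def algebra_simps)
  have lo: "s * a^t \<le> P t + s * b^t" for t
  proof -
    have "D t \<le> s * b^t" using D_eq[of t] D0_le by (simp add: s_def b_def mult.commute)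
    thus ?thesis using P_lower[of t] S_eq[of t] by (simp add: a_def s_def algebra_simps)
  qed
  have lo2: "s * a^t \<le> 2 * P t" if "t \<ge> 2" for t
  proof -
    have "s * (2 * b^t) \<le> s * a^t" using key[OF that] by simp
    thus ?thesis using lo[of t] by linarith
  qed
  show ?thesis
  proof (rule bigthetaI'[of "real s / 2" "real (k^2 * s)"])
    show "real s / 2 > 0" using s1 by simp
    show "real (k^2 * s) > 0" using s1 assms(1) by simp
    show "\<forall>\<^sub>F t in at_top. real s / 2 * norm (real (k^2+1) ^ t) \<le> norm (real (card (paths2 (ilth_V V0 t) (ilth_E E0 t)))) \<and>
        norm (real (card (paths2 (ilth_V V0 t) (ilth_E E0 t)))) \<le> real (k^2 * s) * norm (real (k^2+1) ^ t)"
      unfolding eventually_at_top_linorder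
    proof (intro exI[of _ 2] allI impI)
      fix t :: nat assume t: "t \<ge> 2"
      have c: "card (paths2 (ilth_V V0 t) (ilth_E E0 t)) = P t" by (simp add: P_def)
      have "real (s * a^t) \<le> real (2 * P t)" using lo2[OF t] by linarith
      hence l: "real s / 2 * real a ^ t \<le> real (P t)" by simp
      have "real (P t) \<le> real (k^2 * s * a^t)" using up[of t] by linarith
      hence r: "real (P t) \<le> real (k^2 * s) * real a ^ t" by simp
      show "real s / 2 * norm (real (k^2+1) ^ t) \<le> norm (real (card (paths2 (ilth_V V0 t) (ilth_E E0 t)))) \<and>
        norm (real (card (paths2 (ilth_V V0 t) (ilth_E E0 t)))) \<le> real (k^2 * s) * norm (real (k^2+1) ^ t)"
        using l r unfolding c a_def by simp
    qed
  qed
qed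

end
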